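(* Let $\lambda_1,\lambda_2,\lambda_3$ be pairwise distinct nonzero complex numbers, $J_1=\mathrm{diag}(\lambda_1,\lambda_2,\lambda_3)$, and $h>0$. Define $$T_1=\lambda_1(e^{\lambda_2h}-e^{\lambda_3h})+\lambda_2(e^{\lambda_3h}-e^{\lambda_1h})+\lambda_3(e^{\lambda_1h}-e^{\lambda_2h}),$$ $$T_2=\lambda_1(1-e^{\lambda_1h})(e^{\lambda_2h}-e^{\lambda_3h})+\lambda_2(1-e^{\lambda_2h})(e^{\lambda_3h}-e^{\lambda_1h})+\lambda_3(1-e^{\lambda_3h})(e^{\lambda_1h}-e^{\lambda_2h}),$$ $C_1=\lambda_2-\lambda_1+\lambda_1e^{\lambda_1h}-\lambda_2e^{\lambda_2h}$, and $$\theta=\frac{T_1}{T_2},\qquad \phi=\frac{e^{\lambda_1h}-e^{\lambda_2h}}{\lambda_1-\lambda_2+\theta C_1},\qquad \psi=e^{\lambda_3h}-\phi\lambda_3\big(\theta e^{\lambda_3h}+1-\theta\big).$$ Then (whenever these expressions are defined and the scheme is uniquely solvable for $\mathbf{x}_{k+1}$) the difference scheme $$\frac{\mathbf{x}_{k+1}-\psi\mathbf{x}_k}{\phi}=J_1\big[\theta\mathbf{x}_{k+1}+(1-\theta)\mathbf{x}_k\big]$$ is exact for the system $\mathbf{x}'=J_1\mathbf{x}$, $\mathbf{x}(t)=(x(t),y(t),z(t))^T$.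
   Context: A one-step difference scheme with step size $h>0$ for $\mathbf{x}'=M\mathbf{x}$ is called exact if for every initial vector $\mathbf{x}_0$ the sequence $(\mathbf{x}_k)$ it generates satisfies $\mathbf{x}_k=\mathbf{x}(kh)$ for all $k\ge 0$, where $\mathbf{x}(t)$ solves $\mathbf{x}'=M\mathbf{x}$, $\mathbf{x}(0)=\mathbf{x}_0$. *)

theory Defs
  imports "HOL-Analysis.Analysis"
begin

text \<open>A one-step scheme is given as a relation S between x_k and x_(k+1).\<close>
definition exact_scheme ::
  "real \<Rightarrow> complex^'n^'n \<Rightarrow> (complex^'n \<Rightarrow> complex^'n \<Rightarrow> bool) \<Rightarrow> bool" where
  "exact_scheme h M S \<longleftrightarrow>
     (\<forall>(xs :: nat \<Rightarrow> complex^'n) (X :: real \<Rightarrow> complex^'n).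
        (\<forall>k. S (xs k) (xs (Suc k))) \<and>
        X 0 = xs 0 \<and> (\<forall>t. (X has_vector_derivative (M *v X t)) (at t))
        \<longrightarrow> (\<forall>k. xs k = X (real k * h)))"

definition diag3 :: "complex \<Rightarrow> complex \<Rightarrow> complex \<Rightarrow> complex^3^3" where
  "diag3 l1 l2 l3 = (\<chi> i j. if i = j then (if i = 1 then l1 else if i = 2 then l2 else l3) else 0)"

definition T1 :: "complex \<Rightarrow> complex \<Rightarrow> complex \<Rightarrow> real \<Rightarrow> complex" where
  "T1 l1 l2 l3 h = (let e1 = exp (l1 * of_real h); e2 = exp (l2 * of_real h); e3 = exp (l3 * of_real h)
     in l1 * (e2 - e3) + l2 * (e3 - e1) + l3 * (e1 - e2))"

definition T2 :: "complex \<Rightarrow> complex \<Rightarrow> complex \<Rightarrow> real \<Rightarrow> complex" where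
  "T2 l1 l2 l3 h = (let e1 = exp (l1 * of_real h); e2 = exp (l2 * of_real h); e3 = exp (l3 * of_real h)
     in l1 * (1 - e1) * (e2 - e3) + l2 * (1 - e2) * (e3 - e1) + l3 * (1 - e3) * (e1 - e2))"

definition C1 :: "complex \<Rightarrow> complex \<Rightarrow> real \<Rightarrow> complex" where
  "C1 l1 l2 h = l2 - l1 + l1 * exp (l1 * of_real h) - l2 * exp (l2 * of_real h)"

definition theta :: "complex \<Rightarrow> complex \<Rightarrow> complex \<Rightarrow> real \<Rightarrow> complex" where
  "theta l1 l2 l3 h = T1 l1 l2 l3 h / T2 l1 l2 l3 h"

definition phi :: "complex \<Rightarrow> complex \<Rightarrow> complex \<Rightarrow> real \<Rightarrow> complex" where
  "phi l1 l2 l3 h = (exp (l1 * of_real h) - exp (l2 * of_real h)) /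
                    (l1 - l2 + theta l1 l2 l3 h * C1 l1 l2 h)"

definition psi :: "complex \<Rightarrow> complex \<Rightarrow> complex \<Rightarrow> real \<Rightarrow> complex" where
  "psi l1 l2 l3 h = exp (l3 * of_real h) - phi l1 l2 l3 h * l3 *
     (theta l1 l2 l3 h * exp (l3 * of_real h) + 1 - theta l1 l2 l3 h)"

definition scheme :: "complex \<Rightarrow> complex \<Rightarrow> complex \<Rightarrow> complex^3^3 \<Rightarrow> complex^3 \<Rightarrow> complex^3 \<Rightarrow> bool" where
  "scheme ph ps th J x y \<longleftrightarrow>
     (1 / ph) *s (y - ps *s x) = J *v (th *s y + (1 - th) *s x)"

end

theory Submission imports Defs begin

lemma key:
  fixes l1 l2 l3 :: complex and h :: real
  assumes T2: "T2 l1 l2 l3 h \<noteq> 0"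
    and D: "l1 - l2 + theta l1 l2 l3 h * C1 l1 l2 h \<noteq> 0"
  defines "ph \<equiv> phi l1 l2 l3 h" and "ps \<equiv> psi l1 l2 l3 h" and "th \<equiv> theta l1 l2 l3 h"
  shows "exp (l1 * of_real h) - ps = ph * l1 * (th * exp (l1 * of_real h) + 1 - th)"
    and "exp (l2 * of_real h) - ps = ph * l2 * (th * exp (l2 * of_real h) + 1 - th)"
    and "exp (l3 * of_real h) - ps = ph * l3 * (th * exp (l3 * of_real h) + 1 - th)"
proof -
  define e1 where "e1 = exp (l1 * of_real h)"
  define e2 where "e2 = exp (l2 * of_real h)"
  define e3 where "e3 = exp (l3 * of_real h)"
  define Dd where "Dd = l1 - l2 + th * C1 l1 l2 h"
  have Dd: "Dd \<noteq> 0" using D by (simp add: Dd_def th_def)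
  have C1e: "C1 l1 l2 h = l2 - l1 + l1 * e1 - l2 * e2" by (simp add: C1_def e1_def e2_def)
  have thT: "th * T2 l1 l2 l3 h = T1 l1 l2 l3 h" using T2 by (simp add: th_def theta_def)
  have T1e: "T1 l1 l2 l3 h = l1 * (e2 - e3) + l2 * (e3 - e1) + l3 * (e1 - e2)"
    by (simp add: T1_def e1_def e2_def e3_def Let_def)
  have T2e: "T2 l1 l2 l3 h = l1 * (1 - e1) * (e2 - e3) + l2 * (1 - e2) * (e3 - e1) + l3 * (1 - e3) * (e1 - e2)"
    by (simp add: T2_def e1_def e2_def e3_def Let_def)
  have phD: "ph * Dd = e1 - e2" using Dd by (simp add: ph_def phi_def Dd_def th_def e1_def e2_def)
  have ps: "ps = e3 - ph * l3 * (th * e3 + 1 - th)" by (simp add: ps_def psi_def ph_def th_def e3_def)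
  have poly: "(e1 - e3) * Dd - (e1 - e2) * (l1 - l3 + th * (l3 - l1 + l1 * e1 - l3 * e3))
     = T1 l1 l2 l3 h - th * T2 l1 l2 l3 h"
    unfolding T1e T2e Dd_def C1e by (simp add: algebra_simps)
  hence E: "(e1 - e3) * Dd = (e1 - e2) * (l1 - l3 + th * (l3 - l1 + l1 * e1 - l3 * e3))"
    using thT by simp
  have "(e1 - e3) * Dd = ph * (l1 - l3 + th * (l3 - l1 + l1 * e1 - l3 * e3)) * Dd"
  proof -
    have "ph * (l1 - l3 + th * (l3 - l1 + l1 * e1 - l3 * e3)) * Dd
        = (ph * Dd) * (l1 - l3 + th * (l3 - l1 + l1 * e1 - l3 * e3))" by (simp only: ac_simps)
    thus ?thesis using E phD by simp
  qed
  hence E2: "e1 - e3 = ph * (l1 - l3 + th * (l3 - l1 + l1 * e1 - l3 * e3))"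
    using Dd by simp
  show 3: "e3 - ps = ph * l3 * (th * e3 + 1 - th)" using ps by simp
  have "e1 - ps = (e1 - e3) + ph * l3 * (th * e3 + 1 - th)" using ps by simp
  also have "\<dots> = ph * (l1 - l3 + th * (l3 - l1 + l1 * e1 - l3 * e3)) + ph * l3 * (th * e3 + 1 - th)"
    using E2 by simp
  also have "\<dots> = ph * l1 * (th * e1 + 1 - th)" by (simp add: algebra_simps)
  finally show 1: "e1 - ps = ph * l1 * (th * e1 + 1 - th)" .
  have "e1 - e2 = ph * (l1 - l2 + th * (l2 - l1 + l1 * e1 - l2 * e2))"
    using phD by (simp add: Dd_def C1e)
  hence "e2 - ps = (e1 - ps) - ph * (l1 - l2 + th * (l2 - l1 + l1 * e1 - l2 * e2))" by (simp add: algebra_simps)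
  also have "\<dots> = ph * l1 * (th * e1 + 1 - th) - ph * (l1 - l2 + th * (l2 - l1 + l1 * e1 - l2 * e2))"
    using 1 by simp
  also have "\<dots> = ph * l2 * (th * e2 + 1 - th)" by (simp add: algebra_simps)
  finally show "e2 - ps = ph * l2 * (th * e2 + 1 - th)" .
qed

lemma ode1:
  fixes f :: "real \<Rightarrow> complex"
  assumes d: "\<And>t. (f has_vector_derivative (c * f t)) (at t)"
  shows "f t = exp (c * of_real t) * f 0"
proof -
  define g where "g t = exp (t *\<^sub>R (-c)) * f t" for t
  have gd: "(g has_vector_derivative 0) (at t within UNIV)" for t
  proof -
    have "(g has_vector_derivative (exp (t *\<^sub>R (-c)) * (c * f t) + exp (t *\<^sub>R (-c)) * (-c) * f t)) (at t)"
      unfolding g_def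
      by (intro has_vector_derivative_mult exp_scaleR_has_vector_derivative_right d)
    moreover have "exp (t *\<^sub>R (-c)) * (c * f t) + exp (t *\<^sub>R (-c)) * (-c) * f t = 0"
      by (simp add: algebra_simps)
    ultimately show ?thesis by simp
  qed
  obtain k where k: "\<And>x. x \<in> UNIV \<Longrightarrow> g x = k"
    by (rule has_vector_derivative_zero_constant[of UNIV g]) (use gd in auto)
  have "g t = g 0" using k by simp
  hence e: "exp (- (c * of_real t)) * f t = f 0"
    by (simp add: g_def scaleR_conv_of_real mult.commute)
  have "exp (c * of_real t) * exp (- (c * of_real t)) = 1"
    by (simp add: exp_add[symmetric])
  hence "f t = exp (c * of_real t) * (exp (- (c * of_real t)) * f t)"
    by (metis mult.assoc mult_1)
  thus ?thesis using e by simp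
qed

lemma diag_mv: "diag3 l1 l2 l3 *v v = (\<chi> i. (if i = 1 then l1 else if i = 2 then l2 else l3) * v $ i)"
  unfolding diag3_def
  by (simp add: vec_eq_iff matrix_vector_mult_def if_distrib[where f="\<lambda>x. x * _"] cong: if_cong)

theorem theorem4:
  fixes l1 l2 l3 :: complex and h :: real
  assumes "l1 \<noteq> 0" "l2 \<noteq> 0" "l3 \<noteq> 0"
    and "l1 \<noteq> l2" "l1 \<noteq> l3" "l2 \<noteq> l3"
    and "h > 0"
    and "T2 l1 l2 l3 h \<noteq> 0"
    and "l1 - l2 + theta l1 l2 l3 h * C1 l1 l2 h \<noteq> 0"
    and "phi l1 l2 l3 h \<noteq> 0"
    and "\<forall>x. \<exists>!y. scheme (phi l1 l2 l3 h) (psi l1 l2 l3 h) (theta l1 l2 l3 h) (diag3 l1 l2 l3) x y"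
  shows "exact_scheme h (diag3 l1 l2 l3)
           (scheme (phi l1 l2 l3 h) (psi l1 l2 l3 h) (theta l1 l2 l3 h) (diag3 l1 l2 l3))"
proof -
  define ph where "ph = phi l1 l2 l3 h"
  define ps where "ps = psi l1 l2 l3 h"
  define th where "th = theta l1 l2 l3 h"
  define L :: "3 \<Rightarrow> complex" where "L i = (if i = 1 then l1 else if i = 2 then l2 else l3)" for i
  have ph0: "ph \<noteq> 0" using assms(10) by (simp add: ph_def)
  have uniq: "\<forall>x. \<exists>!y. scheme ph ps th (diag3 l1 l2 l3) x y" using assms(11) by (simp add: ph_def ps_def th_def)
  have dmv: "diag3 l1 l2 l3 *v v = (\<chi> i. L i * v $ i)" for v
    by (simp add: diag_mv L_def)
  have keyi: "exp (L i * of_real h) - ps = ph * L i * (th * exp (L i * of_real h) + 1 - th)" for i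
    using key[OF assms(8,9)] unfolding ph_def ps_def th_def L_def by auto
  have sch_iff: "scheme ph ps th (diag3 l1 l2 l3) x y \<longleftrightarrow>
      (\<forall>i. (1 / ph) * (y $ i - ps * x $ i) = L i * (th * y $ i + (1 - th) * x $ i))" for x y
    unfolding scheme_def dmv by (simp add: vec_eq_iff diff_divide_distrib algebra_simps)
  have nz: "1 - ph * L i * th \<noteq> 0" for i
  proof
    assume z: "1 - ph * L i * th = 0"
    have a: "scheme ph ps th (diag3 l1 l2 l3) 0 0" unfolding sch_iff by simp
    have b: "scheme ph ps th (diag3 l1 l2 l3) 0 (axis i 1)" unfolding sch_iff
    proof
      fix j show "1 / ph * (axis i 1 $ j - ps * 0 $ j) = L j * (th * axis i 1 $ j + (1 - th) * 0 $ j)"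
      proof (cases "j = i")
        case True
        have "1 / ph = L i * th" using z ph0 by (simp add: field_simps)
        thus ?thesis using True by (simp add: axis_def)
      qed (simp add: axis_def)
    qed
    have "axis i (1::complex) \<noteq> 0" by (simp add: axis_eq_0_iff)
    thus False using uniq a b by blast
  qed
  have step: "y $ i = exp (L i * of_real h) * x $ i" if s: "scheme ph ps th (diag3 l1 l2 l3) x y" for x y i
  proof -
    define e where "e = exp (L i * of_real h)"
    have "(1 / ph) * (y $ i - ps * x $ i) = L i * (th * y $ i + (1 - th) * x $ i)"
      using s unfolding sch_iff by blast
    hence "y $ i - ps * x $ i = ph * L i * (th * y $ i + (1 - th) * x $ i)"
      using ph0 by (simp add: field_simps)
    hence "y $ i * (1 - ph * L i * th) = x $ i * (ps + ph * L i * (1 - th))"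
      by (simp add: algebra_simps)
    also have "ps = e - ph * L i * (th * e + 1 - th)"
    proof -
      have "ps = e - (e - ps)" by simp
      also have "e - ps = ph * L i * (th * e + 1 - th)" using keyi[of i] by (simp only: e_def)
      finally show ?thesis .
    qed
    finally have "y $ i * (1 - ph * L i * th) = (x $ i * e) * (1 - ph * L i * th)"
      by (simp add: algebra_simps)
    hence "y $ i = x $ i * e" using nz[of i] by simp
    thus ?thesis by (simp add: e_def)
  qed
  show ?thesis
    unfolding exact_scheme_def ph_def[symmetric] ps_def[symmetric] th_def[symmetric]
  proof (intro allI impI)
    fix xs :: "nat \<Rightarrow> complex^3" and X :: "real \<Rightarrow> complex^3" and k
    assume H: "(\<forall>k. scheme ph ps th (diag3 l1 l2 l3) (xs k) (xs (Suc k))) \<and> X 0 = xs 0 \<and>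
        (\<forall>t. (X has_vector_derivative diag3 l1 l2 l3 *v X t) (at t))"
    have seq: "xs n $ i = exp (L i * of_real (real n * h)) * xs 0 $ i" for n i
    proof (induction n)
      case 0 then show ?case by simp
    next
      case (Suc n)
      have "xs (Suc n) $ i = exp (L i * of_real h) * xs n $ i" using step H by blast
      also have "\<dots> = exp (L i * of_real h) * exp (L i * of_real (real n * h)) * xs 0 $ i"
        using Suc by simp
      also have "exp (L i * of_real h) * exp (L i * of_real (real n * h)) = exp (L i * of_real (real (Suc n) * h))"
        by (simp add: exp_add[symmetric] algebra_simps)
      finally show ?case .
    qed
    have ode: "X t $ i = exp (L i * of_real t) * X 0 $ i" for t i
    proof (rule ode1[where f = "\<lambda>t. X t $ i"])
      fix t
      have "((\<lambda>t. X t $ i) has_vector_derivative (diag3 l1 l2 l3 *v X t) $ i) (at t)"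
        using bounded_linear.has_vector_derivative[OF bounded_linear_vec_nth] H by blast
      thus "((\<lambda>t. X t $ i) has_vector_derivative L i * X t $ i) (at t)" by (simp add: dmv)
    qed
    show "xs k = X (real k * h)"
      unfolding vec_eq_iff
    proof
      fix i
      have "X (real k * h) $ i = exp (L i * of_real (real k * h)) * X 0 $ i" by (rule ode)
      also have "X 0 = xs 0" using H by blast
      finally show "xs k $ i = X (real k * h) $ i" using seq[of k i] by simp
    qed
  qed
qed

end
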